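(* Let $U\subseteq\mathbb{R}^4$ be open and let $f:U\to\mathbb{H}$ be a smooth diffeomorphism onto an open set that maps every line segment contained in $U$ onto an arc of a round circle or a line segment in $\mathbb{H}=\mathbb{R}^4$. Write $A_\alpha=\partial_\alpha f$ and suppose there is a smooth quaternion-valued 1-form $B$ on $U$ with $\partial_\alpha A_\alpha=B_\alpha A_\alpha$ for all constant vector fields $\alpha$. Let $C:U\to\mathbb{H}$ be the function such that $$\partial_\alpha B_\beta-\tfrac12 B_\alpha B_\beta=\tfrac13\,C\,\bigl(\overline{A_\alpha}A_\beta+\overline{A_\beta}A_\alpha+A_\alpha\overline{A_\beta}\bigr)$$ for all $\alpha,\beta$ (equivalently, $\partial_\alpha B_\alpha-\tfrac12B_\alpha^2=C|A_\alpha|^2$). Then $C$ is real-valued.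
   Context: $\mathbb{R}^4$ is identified with the quaternions $\mathbb{H}$; for a constant vector field $\alpha$, $\partial_\alpha$ is the directional derivative along $\alpha$; a quaternion-valued 1-form $B$ assigns to each point an $\mathbb{R}$-linear map $\alpha\mapsto B_\alpha\in\mathbb{H}$. Products are quaternion products, $\bar{\cdot}$ is conjugation, $|\cdot|$ the norm. *)

theory Defs
  imports "HOL-Analysis.Analysis"
begin

text \<open>Quaternions H are identified with real^4: component 1 is the real part,
  components 2,3,4 the i, j, k parts.\<close>

type_synonym quat = "real ^ 4"

definition qre :: "quat \<Rightarrow> real" where "qre p = p $ 1"
definition qi  :: "quat \<Rightarrow> real" where "qi p = p $ 2"
definition qj  :: "quat \<Rightarrow> real" where "qj p = p $ 3"
definition qk  :: "quat \<Rightarrow> real" where "qk p = p $ 4"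

definition qmk :: "real \<Rightarrow> real \<Rightarrow> real \<Rightarrow> real \<Rightarrow> quat" where
  "qmk a b c d = (\<chi> i. if i = 1 then a else if i = 2 then b else if i = 3 then c else d)"

definition qmult :: "quat \<Rightarrow> quat \<Rightarrow> quat" (infixl "\<star>" 70) where
  "p \<star> q = qmk
     (qre p * qre q - qi p * qi q - qj p * qj q - qk p * qk q)
     (qre p * qi q + qi p * qre q + qj p * qk q - qk p * qj q)
     (qre p * qj q - qi p * qk q + qj p * qre q + qk p * qi q)
     (qre p * qk q + qi p * qj q - qj p * qi q + qk p * qre q)"

definition qconj :: "quat \<Rightarrow> quat" where
  "qconj p = qmk (qre p) (- qi p) (- qj p) (- qk p)"

definition quat_is_real :: "quat \<Rightarrow> bool" where
  "quat_is_real p \<longleftrightarrow> qi p = 0 \<and> qj p = 0 \<and> qk p = 0"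

definition dderiv :: "('a::real_normed_vector \<Rightarrow> 'b::real_normed_vector) \<Rightarrow> 'a \<Rightarrow> 'a \<Rightarrow> 'b" where
  "dderiv g v x = frechet_derivative g (at x) v"

text \<open>C^k on a set: differentiable, and all directional derivatives are C^(k-1)
  (for open sets in finite dimensions this is the usual C^k).\<close>
fun Ck_on :: "nat \<Rightarrow> 'a set \<Rightarrow> ('a::euclidean_space \<Rightarrow> 'b::real_normed_vector) \<Rightarrow> bool" where
  "Ck_on 0 U g = continuous_on U g"
| "Ck_on (Suc k) U g = (g differentiable_on U \<and> (\<forall>v. Ck_on k U (\<lambda>x. dderiv g v x)))"

definition smooth_on :: "'a set \<Rightarrow> ('a::euclidean_space \<Rightarrow> 'b::real_normed_vector) \<Rightarrow> bool" where
  "smooth_on U g \<longleftrightarrow> (\<forall>k. Ck_on k U g)"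

definition smooth_diffeo_onto_open :: "quat set \<Rightarrow> (quat \<Rightarrow> quat) \<Rightarrow> bool" where
  "smooth_diffeo_onto_open U f \<longleftrightarrow>
     smooth_on U f \<and> inj_on f U \<and> open (f ` U) \<and>
     (\<exists>g. smooth_on (f ` U) g \<and> (\<forall>x\<in>U. g (f x) = x))"

definition round_circle :: "quat set \<Rightarrow> bool" where
  "round_circle S \<longleftrightarrow> (\<exists>c u v. u \<bullet> v = 0 \<and> norm u = norm v \<and> norm u > 0 \<and>
      S = range (\<lambda>t. c + cos t *\<^sub>R u + sin t *\<^sub>R v))"

definition straight_line :: "quat set \<Rightarrow> bool" where
  "straight_line S \<longleftrightarrow> (\<exists>p d. d \<noteq> 0 \<and> S = range (\<lambda>t. p + t *\<^sub>R d))"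

text \<open>Every segment in U is mapped onto an arc of a round circle or onto a line segment.
  (The image of a segment under a continuous injective map is an arc, so it is an arc of a
  circle / a segment iff it is contained in a circle / a line.)\<close>
definition maps_segments_to_circles :: "quat set \<Rightarrow> (quat \<Rightarrow> quat) \<Rightarrow> bool" where
  "maps_segments_to_circles U f \<longleftrightarrow>
     (\<forall>a b. closed_segment a b \<subseteq> U \<longrightarrow>
        (\<exists>S. (round_circle S \<or> straight_line S) \<and> f ` closed_segment a b \<subseteq> S))"

end

theory Submission
  imports Defs
begin

lemma qcomp_simps[simp]:
  "qre (qmk a b c d) = a" "qi (qmk a b c d) = b" "qj (qmk a b c d) = c" "qk (qmk a b c d) = d"
  by (simp_all add: qre_def qi_def qj_def qk_def qmk_def)

lemma quat_eq_iff: "p = q \<longleftrightarrow> qre p = qre q \<and> qi p = qi q \<and> qj p = qj q \<and> qk p = qk q"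
  by (auto simp: vec_eq_iff forall_4 qre_def qi_def qj_def qk_def)

lemma qlin_simps[simp]:
  "qre (p + q) = qre p + qre q" "qi (p + q) = qi p + qi q" "qj (p + q) = qj p + qj q" "qk (p + q) = qk p + qk q"
  "qre (p - q) = qre p - qre q" "qi (p - q) = qi p - qi q" "qj (p - q) = qj p - qj q" "qk (p - q) = qk p - qk q"
  "qre (r *\<^sub>R p) = r * qre p" "qi (r *\<^sub>R p) = r * qi p" "qj (r *\<^sub>R p) = r * qj p" "qk (r *\<^sub>R p) = r * qk p"
  "qre (- p) = - qre p" "qi (- p) = - qi p" "qj (- p) = - qj p" "qk (- p) = - qk p"
  "qre 0 = 0" "qi 0 = 0" "qj 0 = 0" "qk 0 = 0"
  by (simp_all add: qre_def qi_def qj_def qk_def)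

lemma qinner: "p \<bullet> q = qre p * qre q + qi p * qi q + qj p * qj q + qk p * qk q"
  by (simp add: inner_vec_def sum_4 qre_def qi_def qj_def qk_def)

lemma qmult_simps[simp]:
  "qre (p \<star> q) = qre p * qre q - qi p * qi q - qj p * qj q - qk p * qk q"
  "qi (p \<star> q) = qre p * qi q + qi p * qre q + qj p * qk q - qk p * qj q"
  "qj (p \<star> q) = qre p * qj q - qi p * qk q + qj p * qre q + qk p * qi q"
  "qk (p \<star> q) = qre p * qk q + qi p * qj q - qj p * qi q + qk p * qre q"
  by (simp_all add: qmult_def)

lemma qconj_simps[simp]:
  "qre (qconj p) = qre p" "qi (qconj p) = - qi p" "qj (qconj p) = - qj p" "qk (qconj p) = - qk p"
  by (simp_all add: qconj_def)

lemma qmult_assoc: "(p \<star> q) \<star> r = p \<star> (q \<star> r)"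
  by (simp add: quat_eq_iff algebra_simps)

lemma bilinear_qmult: "bilinear qmult"
  unfolding bilinear_def
  by (auto intro!: linearI simp: quat_eq_iff algebra_simps)

lemma bounded_bilinear_qmult: "bounded_bilinear qmult"
  using bilinear_qmult bilinear_conv_bounded_bilinear by blast

lemma qmult_add_left: "(p + q) \<star> r = p \<star> r + q \<star> r"
  and qmult_add_right: "r \<star> (p + q) = r \<star> p + r \<star> q"
  and qmult_scale_left: "(c *\<^sub>R p) \<star> r = c *\<^sub>R (p \<star> r)"
  and qmult_scale_right: "r \<star> (c *\<^sub>R p) = c *\<^sub>R (r \<star> p)"
  by (simp_all add: quat_eq_iff algebra_simps)

lemma qnorm_sq: "p \<bullet> p = qre p ^ 2 + qi p ^ 2 + qj p ^ 2 + qk p ^ 2"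
  by (simp add: qinner power2_eq_square)

lemma qconj_mult_self: "x \<star> qconj a \<star> a = (a \<bullet> a) *\<^sub>R x"
  by (simp add: quat_eq_iff qinner algebra_simps)

lemma qmult_conj_self: "x \<star> a \<star> qconj a = (a \<bullet> a) *\<^sub>R x"
  by (simp add: quat_eq_iff qinner algebra_simps)

lemma qcancel: assumes "x \<star> a = y \<star> a" "a \<noteq> 0" shows "x = y"
proof -
  have "(a \<bullet> a) *\<^sub>R x = (a \<bullet> a) *\<^sub>R y"
    using assms(1) by (metis qmult_conj_self)
  moreover have "a \<bullet> a \<noteq> 0" using assms(2) by simp
  ultimately show ?thesis by simp
qed

lemma qreal_mult: "qmk t 0 0 0 \<star> a = t *\<^sub>R a"
  by (simp add: quat_eq_iff)

lemma final_alg: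
  assumes "qre q = 0"
  shows "quat_is_real ((qmk g 0 0 0 + (3 * t * s) *\<^sub>R q) - (3/2) *\<^sub>R ((qmk t 0 0 0 + s *\<^sub>R q) \<star> (qmk t 0 0 0 + s *\<^sub>R q)))"
  using assms by (simp add: quat_is_real_def algebra_simps)

lemma decomp2:
  fixes u v :: "'a::real_inner"
  assumes uv: "u \<bullet> v = 0" and uu: "u \<bullet> u = r" and vv: "v \<bullet> v = r" and r: "r > 0"
    and p: "p = p1 *\<^sub>R u + p2 *\<^sub>R v" and a: "a = a1 *\<^sub>R u + a2 *\<^sub>R v"
    and z: "z = z1 *\<^sub>R u + z2 *\<^sub>R v"
    and pa: "p \<bullet> a = 0" and p0: "p \<noteq> 0" and a0: "a \<noteq> 0"
  shows "z = ((z \<bullet> p) / (p \<bullet> p)) *\<^sub>R p + ((z \<bullet> a) / (a \<bullet> a)) *\<^sub>R a"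
proof -
  have vu: "v \<bullet> u = 0" using uv by (simp add: inner_commute)
  have ip: "\<And>x1 x2 y1 y2. (x1 *\<^sub>R u + x2 *\<^sub>R v) \<bullet> (y1 *\<^sub>R u + y2 *\<^sub>R v) = r * (x1*y1 + x2*y2)"
    by (simp add: inner_add_left inner_add_right uu vv uv vu algebra_simps)
  have o: "p1*a1 + p2*a2 = 0" using pa r by (simp add: p a ip)
  define P where "P = p1^2 + p2^2"
  define A where "A = a1^2 + a2^2"
  have pp: "p \<bullet> p = r * P" by (simp add: p ip P_def power2_eq_square)
  have aa: "a \<bullet> a = r * A" by (simp add: a ip A_def power2_eq_square)
  have P0: "P \<noteq> 0" using p0 pp r by auto
  have A0: "A \<noteq> 0" using a0 aa r by auto
  have zp: "z \<bullet> p = r * (z1*p1 + z2*p2)" by (simp add: z p ip)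
  have za: "z \<bullet> a = r * (z1*a1 + z2*a2)" by (simp add: z a ip)
  have e1: "p1^2*A + a1^2*P - P*A = (p1*a1 - p2*a2)*(p1*a1+p2*a2)"
    by (simp add: P_def A_def algebra_simps power2_eq_square)
  have e2: "p1*p2*A + a1*a2*P = (p1*a1+p2*a2)*(p2*a1+p1*a2)"
    by (simp add: P_def A_def algebra_simps power2_eq_square)
  have e3: "p2^2*A + a2^2*P - P*A = (p2*a2 - p1*a1)*(p1*a1+p2*a2)"
    by (simp add: P_def A_def algebra_simps power2_eq_square)
  have c1: "((z1*p1 + z2*p2)/P)*p1 + ((z1*a1 + z2*a2)/A)*a1 = z1"
  proof -
    have "(z1*p1 + z2*p2)*p1*A + (z1*a1 + z2*a2)*a1*P = z1*P*A + z1*(p1^2*A + a1^2*P - P*A) + z2*(p1*p2*A + a1*a2*P)"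
      by (simp add: algebra_simps power2_eq_square)
    also have "\<dots> = z1*P*A" using e1 e2 o by simp
    finally show ?thesis using P0 A0 by (simp add: field_simps)
  qed
  have c2: "((z1*p1 + z2*p2)/P)*p2 + ((z1*a1 + z2*a2)/A)*a2 = z2"
  proof -
    have "(z1*p1 + z2*p2)*p2*A + (z1*a1 + z2*a2)*a2*P = z2*P*A + z2*(p2^2*A + a2^2*P - P*A) + z1*(p1*p2*A + a1*a2*P)"
      by (simp add: algebra_simps power2_eq_square)
    also have "\<dots> = z2*P*A" using e3 e2 o by simp
    finally show ?thesis using P0 A0 by (simp add: field_simps)
  qed
  have "((z \<bullet> p) / (p \<bullet> p)) *\<^sub>R p + ((z \<bullet> a) / (a \<bullet> a)) *\<^sub>R a
      = (((z1*p1 + z2*p2)/P)*p1 + ((z1*a1 + z2*a2)/A)*a1) *\<^sub>R u + (((z1*p1 + z2*p2)/P)*p2 + ((z1*a1 + z2*a2)/A)*a2) *\<^sub>R v"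
  proof -
    have "r * (z1*p1 + z2*p2) / (r * P) = (z1*p1 + z2*p2) / P" "r * (z1*a1 + z2*a2) / (r * A) = (z1*a1 + z2*a2) / A"
      using r by simp_all
    then show ?thesis unfolding zp za pp aa
      by (simp add: p a algebra_simps scaleR_add_left)
  qed
  also have "\<dots> = z" by (simp only: c1 c2 z)
  finally show ?thesis by simp
qed

lemma qre_mult_conj: "qre (p \<star> qconj a) = p \<bullet> a"
  by (simp add: qinner)

lemma circle_alg:
  fixes p a b D u v :: quat
  assumes uv: "u \<bullet> v = 0" and uu: "u \<bullet> u = r" and vv: "v \<bullet> v = r" and r: "r > 0"
    and W: "\<And>z. z \<in> {p, a, b \<star> a, D \<star> a} \<Longrightarrow> z = ((z \<bullet> u) / r) *\<^sub>R u + ((z \<bullet> v) / r) *\<^sub>R v"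
    and pp: "p \<bullet> p = r" and pa: "p \<bullet> a = 0" and h2: "a \<bullet> a + p \<bullet> (b \<star> a) = 0"
    and h3: "3 * (a \<bullet> (b \<star> a)) + p \<bullet> (D \<star> a) = 0" and a0: "a \<noteq> 0"
  shows "quat_is_real (D - (3/2) *\<^sub>R (b \<star> b))"
proof -
  have p0: "p \<noteq> 0" using pp r by auto
  have dec: "z = ((z \<bullet> p) / (p \<bullet> p)) *\<^sub>R p + ((z \<bullet> a) / (a \<bullet> a)) *\<^sub>R a"
    if "z \<in> {b \<star> a, D \<star> a}" for z
    by (rule decomp2[OF uv uu vv r W W W pa p0 a0]) (use that in auto)
  define n where "n = a \<bullet> a"
  have n0: "n > 0" using a0 by (simp add: n_def)
  define t where "t = ((b \<star> a) \<bullet> a) / n"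
  define s where "s = - n / r"
  define g where "g = ((D \<star> a) \<bullet> a) / n"
  have ba: "b \<star> a = s *\<^sub>R p + t *\<^sub>R a"
  proof -
    have "(b \<star> a) \<bullet> p = - n" using h2 by (simp add: n_def inner_commute)
    then show ?thesis using dec[of "b \<star> a"] by (simp add: s_def t_def n_def pp)
  qed
  have Da: "D \<star> a = (3 * t * s) *\<^sub>R p + g *\<^sub>R a"
  proof -
    have "(D \<star> a) \<bullet> p = - 3 * t * n" using h3 n0 by (simp add: t_def inner_commute)
    moreover have "- 3 * t * n / r = 3 * t * s" by (simp add: s_def)
    ultimately show ?thesis using dec[of "D \<star> a"] by (simp add: g_def n_def pp)
  qed
  define q where "q = (1 / n) *\<^sub>R (p \<star> qconj a)"
  have qa: "q \<star> a = p"
    using n0 by (simp add: q_def qmult_scale_left qconj_mult_self n_def)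
  have qre: "qre q = 0" using pa by (simp add: q_def qinner)
  have "b \<star> a = (qmk t 0 0 0 + s *\<^sub>R q) \<star> a"
    by (simp add: ba qmult_add_left qreal_mult qmult_scale_left qa)
  then have b: "b = qmk t 0 0 0 + s *\<^sub>R q" using a0 qcancel by blast
  have "D \<star> a = (qmk g 0 0 0 + (3 * t * s) *\<^sub>R q) \<star> a"
    by (simp add: Da qmult_add_left qreal_mult qmult_scale_left qa)
  then have D: "D = qmk g 0 0 0 + (3 * t * s) *\<^sub>R q" using a0 qcancel by blast
  show ?thesis unfolding b D by (rule final_alg[OF qre])
qed

lemma line_alg:
  fixes a b D d :: quat
  assumes d0: "d \<noteq> 0"
    and W: "\<And>z. z \<in> {a, b \<star> a, D \<star> a} \<Longrightarrow> z = ((z \<bullet> d) / (d \<bullet> d)) *\<^sub>R d"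
    and a0: "a \<noteq> 0"
  shows "quat_is_real (D - (3/2) *\<^sub>R (b \<star> b))"
proof -
  define k where "k = (a \<bullet> d) / (d \<bullet> d)"
  have a: "a = k *\<^sub>R d" using W[of a] by (simp add: k_def)
  have k0: "k \<noteq> 0" using a a0 by auto
  have ba: "b \<star> a = (((b \<star> a) \<bullet> d) / (d \<bullet> d) / k) *\<^sub>R a" using W[of "b \<star> a"] k0 by (simp add: a)
  have Da: "D \<star> a = (((D \<star> a) \<bullet> d) / (d \<bullet> d) / k) *\<^sub>R a" using W[of "D \<star> a"] k0 by (simp add: a)
  have "b \<star> a = qmk (((b \<star> a) \<bullet> d) / (d \<bullet> d) / k) 0 0 0 \<star> a" by (subst ba) (simp add: qreal_mult)
  then have b: "b = qmk (((b \<star> a) \<bullet> d) / (d \<bullet> d) / k) 0 0 0" using a0 qcancel by blast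
  have "D \<star> a = qmk (((D \<star> a) \<bullet> d) / (d \<bullet> d) / k) 0 0 0 \<star> a" by (subst Da) (simp add: qreal_mult)
  then have D: "D = qmk (((D \<star> a) \<bullet> d) / (d \<bullet> d) / k) 0 0 0" using a0 qcancel by blast
  show ?thesis by (subst b, subst b, subst D) (simp add: quat_is_real_def)
qed

lemma vd_zero:
  assumes "open T" "t \<in> T" "\<forall>s\<in>T. \<phi> s = k" "(\<phi> has_vector_derivative \<phi>') (at t)"
  shows "\<phi>' = 0"
proof -
  have "((\<lambda>_. k) has_vector_derivative 0) (at t)" by (rule has_vector_derivative_const)
  then have "(\<phi> has_vector_derivative 0) (at t)"
    by (rule has_vector_derivative_transform_within_open[OF _ assms(1,2)]) (use assms(3) in auto)
  then show ?thesis using assms(4) vector_derivative_unique_at by blast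
qed

lemma line_vd:
  assumes "g differentiable at (x + t *\<^sub>R \<alpha>)"
  shows "((\<lambda>t. g (x + t *\<^sub>R \<alpha>)) has_vector_derivative dderiv g \<alpha> (x + t *\<^sub>R \<alpha>)) (at t)"
proof -
  let ?G = "frechet_derivative g (at (x + t *\<^sub>R \<alpha>))"
  have G: "(g has_derivative ?G) (at (x + t *\<^sub>R \<alpha>))" using assms frechet_derivative_works by blast
  have l: "((\<lambda>t. x + t *\<^sub>R \<alpha>) has_derivative (\<lambda>h. h *\<^sub>R \<alpha>)) (at t)"
    by (auto intro!: derivative_eq_intros)
  have "((g \<circ> (\<lambda>t. x + t *\<^sub>R \<alpha>)) has_derivative (?G \<circ> (\<lambda>h. h *\<^sub>R \<alpha>))) (at t)"
    by (rule diff_chain_at[OF l G])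
  moreover have "linear ?G" using G has_derivative_linear by blast
  ultimately show ?thesis
    unfolding has_vector_derivative_def dderiv_def
    by (simp add: o_def linear_cmul)
qed

lemma curve_linear:
  fixes \<gamma> \<gamma>1 \<gamma>2 :: "real \<Rightarrow> 'a::real_normed_vector" and L :: "'a \<Rightarrow> 'b::real_normed_vector"
  assumes T: "open T" "0 \<in> T"
    and d1: "\<forall>t\<in>T. (\<gamma> has_vector_derivative \<gamma>1 t) (at t)"
    and d2: "\<forall>t\<in>T. (\<gamma>1 has_vector_derivative \<gamma>2 t) (at t)"
    and d3: "(\<gamma>2 has_vector_derivative g3) (at 0)"
    and L: "bounded_linear L" and z: "\<forall>t\<in>T. L (\<gamma> t - c) = 0"
  shows "L (\<gamma>1 0) = 0 \<and> L (\<gamma>2 0) = 0 \<and> L g3 = 0"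
proof -
  have z1: "L (\<gamma>1 t) = 0" if "t \<in> T" for t
  proof -
    have "((\<lambda>t. \<gamma> t - c) has_vector_derivative \<gamma>1 t - 0) (at t)"
      using has_vector_derivative_diff[OF bspec[OF d1 that] has_vector_derivative_const[of c]] .
    then have "((\<lambda>t. L (\<gamma> t - c)) has_vector_derivative L (\<gamma>1 t)) (at t)"
      using bounded_linear.has_vector_derivative[OF L] by fastforce
    then show ?thesis by (rule vd_zero[OF T(1) that z])
  qed
  have z1': "\<forall>t\<in>T. L (\<gamma>1 t) = 0" using z1 by blast
  have z2: "L (\<gamma>2 t) = 0" if "t \<in> T" for t
  proof -
    have "((\<lambda>t. L (\<gamma>1 t)) has_vector_derivative L (\<gamma>2 t)) (at t)"
      using bspec[OF d2 that] by (rule bounded_linear.has_vector_derivative[OF L])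
    then show ?thesis by (rule vd_zero[OF T(1) that z1'])
  qed
  have z2': "\<forall>t\<in>T. L (\<gamma>2 t) = 0" using z2 by blast
  have "((\<lambda>t. L (\<gamma>2 t)) has_vector_derivative L g3) (at 0)"
    using d3 by (rule bounded_linear.has_vector_derivative[OF L])
  then have "L g3 = 0" by (rule vd_zero[OF T z2'])
  then show ?thesis using z1 z2 T by auto
qed

lemma curve_norm:
  fixes \<gamma> \<gamma>1 \<gamma>2 :: "real \<Rightarrow> 'a::real_inner"
  assumes T: "open T" "0 \<in> T"
    and d1: "\<forall>t\<in>T. (\<gamma> has_vector_derivative \<gamma>1 t) (at t)"
    and d2: "\<forall>t\<in>T. (\<gamma>1 has_vector_derivative \<gamma>2 t) (at t)"
    and d3: "(\<gamma>2 has_vector_derivative g3) (at 0)"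
    and z: "\<forall>t\<in>T. (\<gamma> t - c) \<bullet> (\<gamma> t - c) = r"
  shows "(\<gamma> 0 - c) \<bullet> \<gamma>1 0 = 0 \<and> \<gamma>1 0 \<bullet> \<gamma>1 0 + (\<gamma> 0 - c) \<bullet> \<gamma>2 0 = 0
         \<and> 3 * (\<gamma>1 0 \<bullet> \<gamma>2 0) + (\<gamma> 0 - c) \<bullet> g3 = 0"
proof -
  note bi = bounded_bilinear.has_vector_derivative[OF bounded_bilinear_inner]
  have dc: "((\<lambda>t. \<gamma> t - c) has_vector_derivative \<gamma>1 t) (at t)" if "t \<in> T" for t
    using has_vector_derivative_diff[OF bspec[OF d1 that] has_vector_derivative_const[of c]] by simp
  have z1: "(\<gamma> t - c) \<bullet> \<gamma>1 t = 0" if "t \<in> T" for t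
  proof -
    have "((\<lambda>t. (\<gamma> t - c) \<bullet> (\<gamma> t - c)) has_vector_derivative
        ((\<gamma> t - c) \<bullet> \<gamma>1 t + \<gamma>1 t \<bullet> (\<gamma> t - c))) (at t)"
      using dc[OF that] dc[OF that] by (rule bi)
    then have "(\<gamma> t - c) \<bullet> \<gamma>1 t + \<gamma>1 t \<bullet> (\<gamma> t - c) = 0" by (rule vd_zero[OF T(1) that z])
    then show ?thesis by (simp add: inner_commute)
  qed
  have z1': "\<forall>t\<in>T. (\<gamma> t - c) \<bullet> \<gamma>1 t = 0" using z1 by blast
  have z2: "\<gamma>1 t \<bullet> \<gamma>1 t + (\<gamma> t - c) \<bullet> \<gamma>2 t = 0" if "t \<in> T" for t
  proof -
    have "((\<lambda>t. (\<gamma> t - c) \<bullet> \<gamma>1 t) has_vector_derivative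
        ((\<gamma> t - c) \<bullet> \<gamma>2 t + \<gamma>1 t \<bullet> \<gamma>1 t)) (at t)"
      using dc[OF that] bspec[OF d2 that] by (rule bi)
    then have "(\<gamma> t - c) \<bullet> \<gamma>2 t + \<gamma>1 t \<bullet> \<gamma>1 t = 0" by (rule vd_zero[OF T(1) that z1'])
    then show ?thesis by simp
  qed
  have z2': "\<forall>t\<in>T. \<gamma>1 t \<bullet> \<gamma>1 t + (\<gamma> t - c) \<bullet> \<gamma>2 t = 0" using z2 by blast
  have "((\<lambda>t. \<gamma>1 t \<bullet> \<gamma>1 t + (\<gamma> t - c) \<bullet> \<gamma>2 t) has_vector_derivative
        ((\<gamma>1 0 \<bullet> \<gamma>2 0 + \<gamma>2 0 \<bullet> \<gamma>1 0) + ((\<gamma> 0 - c) \<bullet> g3 + \<gamma>1 0 \<bullet> \<gamma>2 0))) (at 0)"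
    using bspec[OF d2 T(2)] dc[OF T(2)] d3
    by (intro has_vector_derivative_add bi) 
  then have "(\<gamma>1 0 \<bullet> \<gamma>2 0 + \<gamma>2 0 \<bullet> \<gamma>1 0) + ((\<gamma> 0 - c) \<bullet> g3 + \<gamma>1 0 \<bullet> \<gamma>2 0) = 0"
    by (rule vd_zero[OF T z2'])
  then show ?thesis using z1 z2 T by (simp add: inner_commute)
qed

lemma bounded_linear_fin: "linear (L :: quat \<Rightarrow> quat) \<Longrightarrow> bounded_linear L"
  using linear_conv_bounded_linear by blast

lemma schwarz_real:
  fixes f :: "quat \<Rightarrow> quat" and B :: "quat \<Rightarrow> quat \<Rightarrow> quat"
  assumes U: "open U" and x: "x \<in> U" and segs: "maps_segments_to_circles U f"
    and fd: "\<forall>y\<in>U. f differentiable at y"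
    and Ad: "\<forall>y\<in>U. (\<lambda>y. dderiv f \<alpha> y) differentiable at y"
    and Bd: "\<forall>y\<in>U. (\<lambda>y. B y \<alpha>) differentiable at y"
    and h6: "\<forall>y\<in>U. dderiv (\<lambda>y. dderiv f \<alpha> y) \<alpha> y = B y \<alpha> \<star> dderiv f \<alpha> y"
    and a0: "dderiv f \<alpha> x \<noteq> 0"
  shows "quat_is_real (dderiv (\<lambda>y. B y \<alpha>) \<alpha> x - (1/2) *\<^sub>R (B x \<alpha> \<star> B x \<alpha>))"
proof -
  define a where "a = dderiv f \<alpha> x"
  define b where "b = B x \<alpha>"
  define d where "d = dderiv (\<lambda>y. B y \<alpha>) \<alpha> x"
  have \<alpha>0: "\<alpha> \<noteq> 0"
  proof
    assume "\<alpha> = 0"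
    have "linear (frechet_derivative f (at x))"
      using fd x linear_frechet_derivative by blast
    then have "dderiv f \<alpha> x = 0" using \<open>\<alpha> = 0\<close> by (simp add: dderiv_def linear_0)
    then show False using a0 by simp
  qed
  obtain \<delta> where \<delta>: "\<delta> > 0" "ball x \<delta> \<subseteq> U" using U x open_contains_ball by blast
  define \<epsilon> where "\<epsilon> = \<delta> / (2 * norm \<alpha>)"
  have \<epsilon>0: "\<epsilon> > 0" using \<delta> \<alpha>0 by (simp add: \<epsilon>_def)
  define T where "T = ball (0::real) \<epsilon>"
  have T: "open T" "0 \<in> T" using \<epsilon>0 by (auto simp: T_def)
  have inball: "x + t *\<^sub>R \<alpha> \<in> ball x \<delta>" if "\<bar>t\<bar> \<le> \<epsilon>" for t
  proof -
    have "norm (t *\<^sub>R \<alpha>) = \<bar>t\<bar> * norm \<alpha>" by simp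
    also have "\<dots> \<le> \<epsilon> * norm \<alpha>" using that by (simp add: mult_right_mono)
    also have "\<dots> = \<delta> / 2" using \<alpha>0 by (simp add: \<epsilon>_def)
    finally show ?thesis using \<delta> by (simp add: dist_norm)
  qed
  have inU: "x + t *\<^sub>R \<alpha> \<in> U" if "t \<in> T" for t
    using inball[of t] that \<delta>(2) by (auto simp: T_def dist_norm)
  define \<gamma> where "\<gamma> = (\<lambda>t::real. f (x + t *\<^sub>R \<alpha>))"
  define \<gamma>1 where "\<gamma>1 = (\<lambda>t::real. dderiv f \<alpha> (x + t *\<^sub>R \<alpha>))"
  define Bl where "Bl = (\<lambda>t::real. B (x + t *\<^sub>R \<alpha>) \<alpha>)"
  define \<gamma>2 where "\<gamma>2 = (\<lambda>t::real. Bl t \<star> \<gamma>1 t)"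
  define g3 where "g3 = b \<star> (b \<star> a) + d \<star> a"
  have d1: "\<forall>t\<in>T. (\<gamma> has_vector_derivative \<gamma>1 t) (at t)"
    unfolding \<gamma>_def \<gamma>1_def using fd inU by (auto intro: line_vd)
  have d2: "\<forall>t\<in>T. (\<gamma>1 has_vector_derivative \<gamma>2 t) (at t)"
  proof
    fix t assume t: "t \<in> T"
    have "(\<gamma>1 has_vector_derivative dderiv (\<lambda>y. dderiv f \<alpha> y) \<alpha> (x + t *\<^sub>R \<alpha>)) (at t)"
      unfolding \<gamma>1_def using Ad inU[OF t] by (auto intro: line_vd)
    then show "(\<gamma>1 has_vector_derivative \<gamma>2 t) (at t)"
      using h6 inU[OF t] by (simp add: \<gamma>2_def Bl_def \<gamma>1_def)
  qed
  have d3: "(\<gamma>2 has_vector_derivative g3) (at 0)"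
  proof -
    have "(Bl has_vector_derivative d) (at 0)"
      using line_vd[of "\<lambda>y. B y \<alpha>" x 0 \<alpha>] Bd x by (simp add: Bl_def d_def)
    from bounded_bilinear.has_vector_derivative[OF bounded_bilinear_qmult this bspec[OF d2 T(2)]]
    show ?thesis
      by (simp add: \<gamma>2_def g3_def Bl_def \<gamma>1_def a_def b_def)
  qed
  have \<gamma>0: "\<gamma> 0 = f x" "\<gamma>1 0 = a" "\<gamma>2 0 = b \<star> a"
    by (simp_all add: \<gamma>_def \<gamma>1_def \<gamma>2_def Bl_def a_def b_def)
  have g3': "g3 = (d + b \<star> b) \<star> a" by (simp add: g3_def qmult_add_left qmult_assoc add.commute)
  have fin: "d - (1/2) *\<^sub>R (b \<star> b) = (d + b \<star> b) - (3/2) *\<^sub>R (b \<star> b)"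
    by (simp only: quat_eq_iff qlin_simps) (simp add: algebra_simps)
  have "closed_segment (x - \<epsilon> *\<^sub>R \<alpha>) (x + \<epsilon> *\<^sub>R \<alpha>) \<subseteq> ball x \<delta>"
  proof (rule closed_segment_subset)
    show "x - \<epsilon> *\<^sub>R \<alpha> \<in> ball x \<delta>" using inball[of "-\<epsilon>"] \<epsilon>0 by simp
    show "x + \<epsilon> *\<^sub>R \<alpha> \<in> ball x \<delta>" using inball[of "\<epsilon>"] \<epsilon>0 by simp
  qed (rule convex_ball)
  then have "closed_segment (x - \<epsilon> *\<^sub>R \<alpha>) (x + \<epsilon> *\<^sub>R \<alpha>) \<subseteq> U" using \<delta>(2) by blast
  then obtain S where S: "round_circle S \<or> straight_line S"
    and fS: "f ` closed_segment (x - \<epsilon> *\<^sub>R \<alpha>) (x + \<epsilon> *\<^sub>R \<alpha>) \<subseteq> S"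
    using segs unfolding maps_segments_to_circles_def by blast
  have inS: "\<gamma> t \<in> S" if "t \<in> T" for t
  proof -
    define u where "u = (t + \<epsilon>) / (2 * \<epsilon>)"
    have t': "\<bar>t\<bar> < \<epsilon>" using that by (simp add: T_def)
    have u01: "0 \<le> u" "u \<le> 1" using t' \<epsilon>0 by (auto simp: u_def field_simps)
    have "(1 - u) *\<^sub>R (x - \<epsilon> *\<^sub>R \<alpha>) + u *\<^sub>R (x + \<epsilon> *\<^sub>R \<alpha>) = x + ((2 * u - 1) * \<epsilon>) *\<^sub>R \<alpha>"
      by (simp add: vec_eq_iff algebra_simps)
    also have "(2 * u - 1) * \<epsilon> = t" using \<epsilon>0 by (simp add: u_def field_simps)
    finally have "x + t *\<^sub>R \<alpha> \<in> closed_segment (x - \<epsilon> *\<^sub>R \<alpha>) (x + \<epsilon> *\<^sub>R \<alpha>)"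
      unfolding in_segment using u01 by metis
    then show ?thesis using fS by (auto simp: \<gamma>_def)
  qed
  from S show ?thesis
  proof
    assume "round_circle S"
    then obtain c u v where uv: "u \<bullet> v = 0" "norm u = norm v" "norm u > 0"
      and Sdef: "S = range (\<lambda>t. c + cos t *\<^sub>R u + sin t *\<^sub>R v)"
      unfolding round_circle_def by blast
    define r where "r = u \<bullet> u"
    have r0: "r > 0" using uv(3) by (simp add: r_def)
    have uu: "u \<bullet> u = r" by (simp add: r_def)
    have vv: "v \<bullet> v = r" using uv by (simp add: r_def dot_square_norm)
    have vu: "v \<bullet> u = 0" using uv by (simp add: inner_commute)
    define Pm where "Pm = (\<lambda>z::quat. z - ((z \<bullet> u) / r) *\<^sub>R u - ((z \<bullet> v) / r) *\<^sub>R v)"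
    have Plin: "linear Pm"
      by (rule linearI) (simp_all add: Pm_def inner_add_left algebra_simps add_divide_distrib scaleR_add_left)
    have onS: "Pm (y - c) = 0 \<and> (y - c) \<bullet> (y - c) = r" if yS: "y \<in> S" for y
    proof -
      obtain \<theta> where y: "y = c + cos \<theta> *\<^sub>R u + sin \<theta> *\<^sub>R v" using yS Sdef by blast
      have yc: "y - c = cos \<theta> *\<^sub>R u + sin \<theta> *\<^sub>R v" using y by simp
      have i1: "(y - c) \<bullet> u = cos \<theta> * r" "(y - c) \<bullet> v = sin \<theta> * r"
        unfolding yc by (simp_all add: inner_add_left uu vv uv vu)
      have "(y - c) \<bullet> (y - c) = r * (cos \<theta> * cos \<theta>) + r * (sin \<theta> * sin \<theta>)"
        unfolding yc by (simp add: inner_add_left inner_add_right uu vv uv vu algebra_simps)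
      also have "\<dots> = r * (cos \<theta> * cos \<theta> + sin \<theta> * sin \<theta>)" by (simp only: distrib_left)
      finally have i2: "(y - c) \<bullet> (y - c) = r" by (simp add: sin_cos_squared_add3)
      show ?thesis using r0 i1 i2 by (simp add: Pm_def yc)
    qed
    have z1: "\<forall>t\<in>T. Pm (\<gamma> t - c) = 0" and z2: "\<forall>t\<in>T. (\<gamma> t - c) \<bullet> (\<gamma> t - c) = r"
      using onS inS by auto
    have L: "Pm (\<gamma>1 0) = 0 \<and> Pm (\<gamma>2 0) = 0 \<and> Pm g3 = 0"
      by (rule curve_linear[OF T d1 d2 d3 bounded_linear_fin[OF Plin] z1])
    have N: "(\<gamma> 0 - c) \<bullet> \<gamma>1 0 = 0 \<and> \<gamma>1 0 \<bullet> \<gamma>1 0 + (\<gamma> 0 - c) \<bullet> \<gamma>2 0 = 0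
         \<and> 3 * (\<gamma>1 0 \<bullet> \<gamma>2 0) + (\<gamma> 0 - c) \<bullet> g3 = 0"
      by (rule curve_norm[OF T d1 d2 d3 z2])
    have P0: "Pm (f x - c) = 0" "(f x - c) \<bullet> (f x - c) = r" using z1 z2 T \<gamma>0 by auto
    have W: "z = ((z \<bullet> u) / r) *\<^sub>R u + ((z \<bullet> v) / r) *\<^sub>R v" if "Pm z = 0" for z
      using that by (simp add: Pm_def algebra_simps)
    have "quat_is_real ((d + b \<star> b) - (3/2) *\<^sub>R (b \<star> b))"
    proof (rule circle_alg[OF uv(1) uu vv r0, where p = "f x - c"])
      fix z assume "z \<in> {f x - c, a, b \<star> a, (d + b \<star> b) \<star> a}"
      then show "z = ((z \<bullet> u) / r) *\<^sub>R u + ((z \<bullet> v) / r) *\<^sub>R v"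
        using W L P0 \<gamma>0 g3' by auto
    qed (use P0 N \<gamma>0 g3' a0 a_def in auto)
    then have "quat_is_real (d - (1/2) *\<^sub>R (b \<star> b))" by (simp only: fin)
    then show ?thesis by (simp only: d_def b_def)
  next
    assume "straight_line S"
    then obtain p0 dd where dd: "dd \<noteq> 0" and Sdef: "S = range (\<lambda>t. p0 + t *\<^sub>R dd)"
      unfolding straight_line_def by blast
    define Qm where "Qm = (\<lambda>z::quat. z - ((z \<bullet> dd) / (dd \<bullet> dd)) *\<^sub>R dd)"
    have Qlin: "linear Qm"
      by (rule linearI) (simp_all add: Qm_def inner_add_left algebra_simps add_divide_distrib scaleR_add_left)
    have onS: "Qm (y - p0) = 0" if yS: "y \<in> S" for y
    proof -
      obtain s where y: "y = p0 + s *\<^sub>R dd" using yS Sdef by blast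
      show ?thesis using dd by (simp add: Qm_def y)
    qed
    have z1: "\<forall>t\<in>T. Qm (\<gamma> t - p0) = 0" using onS inS by auto
    have L: "Qm (\<gamma>1 0) = 0 \<and> Qm (\<gamma>2 0) = 0 \<and> Qm g3 = 0"
      by (rule curve_linear[OF T d1 d2 d3 bounded_linear_fin[OF Qlin] z1])
    have W: "z = ((z \<bullet> dd) / (dd \<bullet> dd)) *\<^sub>R dd" if "Qm z = 0" for z
      using that by (simp add: Qm_def)
    have "quat_is_real ((d + b \<star> b) - (3/2) *\<^sub>R (b \<star> b))"
    proof (rule line_alg[OF dd])
      fix z assume "z \<in> {a, b \<star> a, (d + b \<star> b) \<star> a}"
      then show "z = ((z \<bullet> dd) / (dd \<bullet> dd)) *\<^sub>R dd"
        using W L \<gamma>0 g3' by auto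
    qed (use a0 a_def in auto)
    then have "quat_is_real (d - (1/2) *\<^sub>R (b \<star> b))" by (simp only: fin)
    then show ?thesis by (simp only: d_def b_def)
  qed
qed

lemma Mform: "(1/3) *\<^sub>R (C \<star> (qconj a \<star> a + qconj a \<star> a + a \<star> qconj a)) = (a \<bullet> a) *\<^sub>R C"
  by (simp only: quat_eq_iff qlin_simps qmult_simps qconj_simps qinner) (simp add: algebra_simps)

lemma smooth_diff1: "smooth_on U g \<Longrightarrow> g differentiable_on U"
  unfolding smooth_on_def by (metis Ck_on.simps(2))

lemma smooth_diff2: "smooth_on U g \<Longrightarrow> dderiv g v differentiable_on U"
proof -
  assume "smooth_on U g"
  then have "Ck_on (Suc (Suc 0)) U g" unfolding smooth_on_def by blast
  then show ?thesis by simp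
qed

lemma nonzero_deriv:
  fixes f :: "quat \<Rightarrow> quat"
  assumes U: "open U" and x: "x \<in> U" and dif: "smooth_diffeo_onto_open U f"
  shows "\<exists>\<alpha>. dderiv f \<alpha> x \<noteq> 0"
proof (rule ccontr)
  assume "\<not> ?thesis"
  then have z: "\<And>\<alpha>. frechet_derivative f (at x) \<alpha> = 0" by (simp add: dderiv_def)
  from dif obtain g where g: "smooth_on (f ` U) g" "\<forall>x\<in>U. g (f x) = x" and fo: "open (f ` U)"
    and fs: "smooth_on U f"
    unfolding smooth_diffeo_onto_open_def by blast
  have "f differentiable at x"
    using smooth_diff1[OF fs] U x differentiable_on_eq_differentiable_at by blast
  then have "(f has_derivative frechet_derivative f (at x)) (at x)" using frechet_derivative_works by blast
  moreover have "frechet_derivative f (at x) = (\<lambda>_. 0)" by (rule ext) (rule z)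
  ultimately have fd: "(f has_derivative (\<lambda>_. 0)) (at x)" by simp
  have "g differentiable at (f x)"
    using smooth_diff1[OF g(1)] fo x differentiable_on_eq_differentiable_at by blast
  then obtain G where G: "(g has_derivative G) (at (f x))" unfolding differentiable_def by blast
  have "((g \<circ> f) has_derivative (G \<circ> (\<lambda>_. 0))) (at x)" by (rule diff_chain_at[OF fd G])
  moreover have "linear G" using G has_derivative_linear by blast
  ultimately have h1: "((g \<circ> f) has_derivative (\<lambda>_. 0)) (at x)" by (simp add: o_def linear_0)
  have "(id has_derivative id) (at x)" by (rule has_derivative_id)
  then have h2: "((g \<circ> f) has_derivative id) (at x)"
    by (rule has_derivative_transform_within_open[OF _ U x]) (use g(2) in auto)
  have "id = (\<lambda>_::quat. 0::quat)" using has_derivative_unique[OF h2 h1] .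
  then have "(axis 1 1 :: quat) = 0" by (metis id_apply)
  then show False by (simp add: axis_eq_0_iff)
qed

theorem mainTheorem4:
  fixes U :: "quat set" and f :: "quat \<Rightarrow> quat"
    and B :: "quat \<Rightarrow> quat \<Rightarrow> quat" and C :: "quat \<Rightarrow> quat"
  assumes "open U"
    and "smooth_diffeo_onto_open U f"
    and "maps_segments_to_circles U f"
    and "\<forall>x\<in>U. linear (B x)"
    and "\<forall>\<alpha>. smooth_on U (\<lambda>x. B x \<alpha>)"
    and "\<forall>x\<in>U. \<forall>\<alpha>. dderiv (\<lambda>y. dderiv f \<alpha> y) \<alpha> x = B x \<alpha> \<star> dderiv f \<alpha> x"
    and "\<forall>x\<in>U. \<forall>\<alpha> \<beta>.
           dderiv (\<lambda>y. B y \<beta>) \<alpha> x - (1/2) *\<^sub>R (B x \<alpha> \<star> B x \<beta>)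
           = (1/3) *\<^sub>R (C x \<star> (qconj (dderiv f \<alpha> x) \<star> dderiv f \<beta> x
                              + qconj (dderiv f \<beta> x) \<star> dderiv f \<alpha> x
                              + dderiv f \<alpha> x \<star> qconj (dderiv f \<beta> x)))"
  shows "\<forall>x\<in>U. quat_is_real (C x)"
proof
  fix x assume x: "x \<in> U"
  obtain \<alpha> where a0: "dderiv f \<alpha> x \<noteq> 0" using nonzero_deriv[OF assms(1) x assms(2)] by blast
  have fs: "smooth_on U f" using assms(2) unfolding smooth_diffeo_onto_open_def by blast
  have fd: "\<forall>y\<in>U. f differentiable at y"
    using smooth_diff1[OF fs] assms(1) differentiable_on_eq_differentiable_at by blast
  have Ad: "\<forall>y\<in>U. (\<lambda>y. dderiv f \<alpha> y) differentiable at y"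
    using smooth_diff2[OF fs, of \<alpha>] assms(1) differentiable_on_eq_differentiable_at by auto
  have Bd: "\<forall>y\<in>U. (\<lambda>y. B y \<alpha>) differentiable at y"
    using smooth_diff1[OF spec[OF assms(5), of \<alpha>]] assms(1) differentiable_on_eq_differentiable_at by blast
  have h6: "\<forall>y\<in>U. dderiv (\<lambda>y. dderiv f \<alpha> y) \<alpha> y = B y \<alpha> \<star> dderiv f \<alpha> y"
    using assms(6) by blast
  have S: "quat_is_real (dderiv (\<lambda>y. B y \<alpha>) \<alpha> x - (1/2) *\<^sub>R (B x \<alpha> \<star> B x \<alpha>))"
    by (rule schwarz_real[where B=B, OF assms(1) x assms(3) fd Ad Bd h6 a0])
  define a where "a = dderiv f \<alpha> x"
  have eq: "dderiv (\<lambda>y. B y \<alpha>) \<alpha> x - (1/2) *\<^sub>R (B x \<alpha> \<star> B x \<alpha>) = (a \<bullet> a) *\<^sub>R C x"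
    using assms(7) x Mform[of "C x" a] by (simp add: a_def)
  have n: "a \<bullet> a \<noteq> 0" using a0 by (simp add: a_def)
  show "quat_is_real (C x)" using S n unfolding eq by (simp add: quat_is_real_def)
qed

end
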